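(* Let $G$ be a finite simple graph on $n$ vertices with at least one edge. Then there exists a finite simple graph $G'$ on $n$ vertices such that $G'$ is the disjoint union of $K_2$ and some graph on $n-2$ vertices, and $A_G \cong A_{G'}$ as $\mathbb{C}$-algebras.
   Context: All graphs are finite, with no loops and no multiple edges. For a graph $G$ with vertices numbered $1,\dots,n$, the Clifford graph algebra $A_G$ is the unital associative $\mathbb{C}$-algebra generated by $e_1,\dots,e_n$ subject to the relations $e_i^2=-1$ for all $i$; $e_ie_j=-e_je_i$ if $i\neq j$ and vertices $i,j$ are adjacent; and $e_ie_j=e_je_i$ if $i\ne j$ and vertices $i,j$ are not adjacent. $K_2$ is the complete graph on two vertices (a single edge). The disjoint union of two graphs has as vertex set the disjoint union of vertex sets and as edge set the union of the edge sets. *)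

theory Defs
  imports Complex_Main
begin

definition simple_graph :: "nat \<Rightarrow> nat set set \<Rightarrow> bool" where
  "simple_graph n E \<longleftrightarrow>
     (\<forall>e\<in>E. \<exists>i j. e = {i, j} \<and> i \<noteq> j \<and> i \<in> {1..n} \<and> j \<in> {1..n})"

text \<open>Free associative unital C-algebra on generators e_1..e_n: finitely supported
  functions from words (lists of letters in {1..n}) to complex numbers.\<close>
type_synonym ncpoly = "nat list \<Rightarrow> complex"

definition FA :: "nat \<Rightarrow> ncpoly set" where
  "FA n = {p. finite {w. p w \<noteq> 0} \<and> (\<forall>w. p w \<noteq> 0 \<longrightarrow> set w \<subseteq> {1..n})}"

definition padd :: "ncpoly \<Rightarrow> ncpoly \<Rightarrow> ncpoly" where
  "padd p q = (\<lambda>w. p w + q w)"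

definition psub :: "ncpoly \<Rightarrow> ncpoly \<Rightarrow> ncpoly" where
  "psub p q = (\<lambda>w. p w - q w)"

definition psmult :: "complex \<Rightarrow> ncpoly \<Rightarrow> ncpoly" where
  "psmult c p = (\<lambda>w. c * p w)"

definition pmult :: "ncpoly \<Rightarrow> ncpoly \<Rightarrow> ncpoly" where
  "pmult p q = (\<lambda>w. \<Sum>k\<le>length w. p (take k w) * q (drop k w))"

definition pone :: ncpoly where
  "pone = (\<lambda>w. if w = [] then 1 else 0)"

definition pgen :: "nat \<Rightarrow> ncpoly" where
  "pgen i = (\<lambda>w. if w = [i] then 1 else 0)"

definition relators :: "nat \<Rightarrow> nat set set \<Rightarrow> ncpoly set" where
  "relators n E =
     {padd (pmult (pgen i) (pgen i)) pone | i. i \<in> {1..n}}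
   \<union> {padd (pmult (pgen i) (pgen j)) (pmult (pgen j) (pgen i)) | i j.
        i \<in> {1..n} \<and> j \<in> {1..n} \<and> i \<noteq> j \<and> {i, j} \<in> E}
   \<union> {psub (pmult (pgen i) (pgen j)) (pmult (pgen j) (pgen i)) | i j.
        i \<in> {1..n} \<and> j \<in> {1..n} \<and> i \<noteq> j \<and> {i, j} \<notin> E}"

inductive_set cga_ideal :: "nat \<Rightarrow> nat set set \<Rightarrow> ncpoly set"
  for n :: nat and E :: "nat set set" where
  zero: "(\<lambda>w. 0) \<in> cga_ideal n E"
| rel: "r \<in> relators n E \<Longrightarrow> r \<in> cga_ideal n E"
| add: "p \<in> cga_ideal n E \<Longrightarrow> q \<in> cga_ideal n E \<Longrightarrow> padd p q \<in> cga_ideal n E"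
| smult: "p \<in> cga_ideal n E \<Longrightarrow> psmult c p \<in> cga_ideal n E"
| lmult: "a \<in> FA n \<Longrightarrow> p \<in> cga_ideal n E \<Longrightarrow> pmult a p \<in> cga_ideal n E"
| rmult: "a \<in> FA n \<Longrightarrow> p \<in> cga_ideal n E \<Longrightarrow> pmult p a \<in> cga_ideal n E"

text \<open>The Clifford graph algebra A_G is the quotient FA n / ideal; elements are
  cosets (equivalence classes).\<close>
definition cga_class :: "nat \<Rightarrow> nat set set \<Rightarrow> ncpoly \<Rightarrow> ncpoly set" where
  "cga_class n E p = {q \<in> FA n. psub p q \<in> cga_ideal n E}"

definition cga_carrier :: "nat \<Rightarrow> nat set set \<Rightarrow> ncpoly set set" where
  "cga_carrier n E = cga_class n E ` FA n"

definition cga_iso_map :: "nat \<Rightarrow> nat set set \<Rightarrow> nat set set \<Rightarrow> (ncpoly set \<Rightarrow> ncpoly set) \<Rightarrow> bool" where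
  "cga_iso_map n E E' \<Phi> \<longleftrightarrow>
     bij_betw \<Phi> (cga_carrier n E) (cga_carrier n E')
   \<and> \<Phi> (cga_class n E pone) = cga_class n E' pone
   \<and> (\<forall>p\<in>FA n. \<forall>q\<in>FA n. \<forall>a b.
        a \<in> \<Phi> (cga_class n E p) \<longrightarrow> b \<in> \<Phi> (cga_class n E q) \<longrightarrow>
          \<Phi> (cga_class n E (padd p q)) = cga_class n E' (padd a b)
        \<and> \<Phi> (cga_class n E (pmult p q)) = cga_class n E' (pmult a b))
   \<and> (\<forall>p\<in>FA n. \<forall>a c. a \<in> \<Phi> (cga_class n E p) \<longrightarrow>
          \<Phi> (cga_class n E (psmult c p)) = cga_class n E' (psmult c a))"

definition cga_isomorphic :: "nat \<Rightarrow> nat set set \<Rightarrow> nat set set \<Rightarrow> bool" where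
  "cga_isomorphic n E E' \<longleftrightarrow> (\<exists>\<Phi>. cga_iso_map n E E' \<Phi>)"

end

theory Submission
  imports Defs "HOL-Library.Function_Algebras"
begin


definition mon :: "complex \<Rightarrow> nat list \<Rightarrow> ncpoly" where
  "mon c w = (\<lambda>u. if u = w then c else 0)"

lemma padd_eq: "padd p q = p + q" by (simp add: padd_def fun_eq_iff)
lemma psub_eq: "psub p q = p - q" by (simp add: psub_def fun_eq_iff)
lemma pgen_mono: "pgen i = mon 1 [i]" by (simp add: pgen_def mon_def fun_eq_iff)
lemma pone_mono: "pone = mon 1 []" by (simp add: pone_def mon_def fun_eq_iff)

lemma sum_fun_apply: "(\<Sum>x\<in>S. f x) w = (\<Sum>x\<in>S. (f x) w)" for f :: "'a \<Rightarrow> ncpoly"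
  by (induction S rule: infinite_finite_induct) auto

lemma pmult_mono: "pmult (mon c u) (mon d v) = mon (c*d) (u@v)"
proof
  fix w
  show "pmult (mon c u) (mon d v) w = mon (c*d) (u@v) w"
  proof (cases "w = u @ v")
    case True
    have "pmult (mon c u) (mon d v) w = (\<Sum>k\<le>length w. if k = length u then c*d else 0)"
      unfolding pmult_def mon_def
    proof (rule sum.cong[OF refl])
      fix k assume "k \<in> {..length w}"
      show "(if take k w = u then c else 0) * (if drop k w = v then d else 0) = (if k = length u then c*d else 0)"
      proof (cases "k = length u")
        case True thus ?thesis using \<open>w = u @ v\<close> by simp
      next
        case False
        have "take k w \<noteq> u"
        proof
          assume "take k w = u"
          hence "length (take k w) = length u" by simp
          hence "min k (length w) = length u" by simp
          with False True \<open>k \<in> {..length w}\<close> show False by auto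
        qed
        thus ?thesis using False by simp
      qed
    qed
    also have "\<dots> = c * d" using True by (simp add: sum.delta)
    finally show ?thesis using True by (simp add: mon_def)
  next
    case False
    have "pmult (mon c u) (mon d v) w = (\<Sum>k\<le>length w. 0)"
      unfolding pmult_def mon_def
      by (rule sum.cong[OF refl]) (use False in auto)
    thus ?thesis using False by (simp add: mon_def)
  qed
qed

lemma pmult_add_left: "pmult (p + q) r = pmult p r + pmult q r"
  by (simp add: pmult_def fun_eq_iff sum.distrib distrib_right)
lemma pmult_add_right: "pmult r (p + q) = pmult r p + pmult r q"
  by (simp add: pmult_def fun_eq_iff sum.distrib distrib_left)
lemma pmult_diff_left: "pmult (p - q) r = pmult p r - pmult q r"
  by (simp add: pmult_def fun_eq_iff sum_subtractf left_diff_distrib)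
lemma pmult_diff_right: "pmult r (p - q) = pmult r p - pmult r q"
  by (simp add: pmult_def fun_eq_iff sum_subtractf right_diff_distrib)
lemma pmult_smult_left: "pmult (psmult c p) q = psmult c (pmult p q)"
  by (simp add: pmult_def psmult_def fun_eq_iff sum_distrib_left mult.assoc)
lemma pmult_smult_right: "pmult q (psmult c p) = psmult c (pmult q p)"
  by (simp add: pmult_def psmult_def fun_eq_iff sum_distrib_left mult.left_commute)
lemma pmult_zero_left[simp]: "pmult 0 q = 0"
  by (simp add: pmult_def fun_eq_iff)
lemma pmult_zero_right[simp]: "pmult q 0 = 0"
  by (simp add: pmult_def fun_eq_iff)
lemma pmult_sum_left: "pmult (\<Sum>x\<in>S. f x) r = (\<Sum>x\<in>S. pmult (f x) r)"
  by (induction S rule: infinite_finite_induct) (simp_all add: pmult_add_left del: plus_fun_apply zero_fun_apply)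
lemma pmult_sum_right: "pmult r (\<Sum>x\<in>S. f x) = (\<Sum>x\<in>S. pmult r (f x))"
  by (induction S rule: infinite_finite_induct) (simp_all add: pmult_add_right del: plus_fun_apply zero_fun_apply)
lemma psmult_mon[simp]: "psmult c (mon d w) = mon (c*d) w"
  by (simp add: psmult_def mon_def fun_eq_iff)
lemma psmult_add: "psmult c (p + q) = psmult c p + psmult c q"
  by (simp add: psmult_def fun_eq_iff distrib_left)
lemma psmult_diff: "psmult c (p - q) = psmult c p - psmult c q"
  by (simp add: psmult_def fun_eq_iff right_diff_distrib)
lemma psmult_zero[simp]: "psmult c 0 = 0"
  by (simp add: psmult_def fun_eq_iff)
lemma psmult_sum: "psmult c (\<Sum>x\<in>S. f x) = (\<Sum>x\<in>S. psmult c (f x))"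
  by (induction S rule: infinite_finite_induct) (simp_all add: psmult_add del: plus_fun_apply zero_fun_apply)
lemma psmult_psmult: "psmult c (psmult d p) = psmult (c*d) p"
  by (simp add: psmult_def fun_eq_iff)
lemma psmult_one[simp]: "psmult 1 p = p"
  by (simp add: psmult_def fun_eq_iff)
lemma psmult_neg: "psmult (-1) p = - p"
  by (simp add: psmult_def fun_eq_iff)
lemma mon_add: "mon c w + mon d w = mon (c+d) w"
  by (simp add: mon_def fun_eq_iff)
lemma mon_zero[simp]: "mon 0 w = 0"
  by (simp add: mon_def fun_eq_iff)
lemma mon_neg: "- mon c w = mon (-c) w"
  by (simp add: mon_def fun_eq_iff)


definition fs :: "ncpoly \<Rightarrow> bool" where "fs p \<longleftrightarrow> finite {w. p w \<noteq> 0}"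

lemma expand:
  assumes "finite S" "{w. p w \<noteq> 0} \<subseteq> S"
  shows "p = (\<Sum>w\<in>S. mon (p w) w)"
proof
  fix u
  have "(\<Sum>w\<in>S. mon (p w) w) u = (\<Sum>w\<in>S. if u = w then p w else 0)"
    by (simp add: sum_fun_apply mon_def)
  also have "\<dots> = (if u \<in> S then p u else 0)"
    using assms(1) by (simp add: sum.delta)
  also have "\<dots> = p u" using assms(2) by auto
  finally show "p u = (\<Sum>w\<in>S. mon (p w) w) u" by simp
qed

lemma FA_iff: "p \<in> FA n \<longleftrightarrow> fs p \<and> (\<forall>w. p w \<noteq> 0 \<longrightarrow> set w \<subseteq> {1..n})"
  by (simp add: FA_def fs_def)

lemma FA_expand: "p \<in> FA n \<Longrightarrow> p = (\<Sum>w\<in>{w. p w \<noteq> 0}. mon (p w) w)"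
  by (rule expand) (auto simp: FA_def)

lemma FA_zero[simp]: "0 \<in> FA n"
  by (simp add: FA_def)
lemma FA_mon: "set w \<subseteq> {1..n} \<Longrightarrow> mon c w \<in> FA n"
proof -
  assume a: "set w \<subseteq> {1..n}"
  have "{u. mon c w u \<noteq> 0} \<subseteq> {w}" by (auto simp: mon_def)
  hence "finite {u. mon c w u \<noteq> 0}" using finite_subset by blast
  thus ?thesis using a by (auto simp: FA_def mon_def)
qed
lemma FA_add: "p \<in> FA n \<Longrightarrow> q \<in> FA n \<Longrightarrow> p + q \<in> FA n"
proof -
  assume p: "p \<in> FA n" and q: "q \<in> FA n"
  have "{w. (p+q) w \<noteq> 0} \<subseteq> {w. p w \<noteq> 0} \<union> {w. q w \<noteq> 0}" by auto
  moreover have "finite ({w. p w \<noteq> 0} \<union> {w. q w \<noteq> 0})" using p q by (simp add: FA_def)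
  ultimately have "finite {w. (p+q) w \<noteq> 0}" using finite_subset by blast
  moreover have "\<forall>w. (p+q) w \<noteq> 0 \<longrightarrow> set w \<subseteq> {1..n}"
  proof (intro allI impI)
    fix w assume "(p+q) w \<noteq> 0"
    hence "p w \<noteq> 0 \<or> q w \<noteq> 0" by auto
    thus "set w \<subseteq> {1..n}" using p q unfolding FA_def by blast
  qed
  ultimately show ?thesis by (simp add: FA_def)
qed
lemma FA_smult: "p \<in> FA n \<Longrightarrow> psmult c p \<in> FA n"
proof -
  assume p: "p \<in> FA n"
  have "{w. psmult c p w \<noteq> 0} \<subseteq> {w. p w \<noteq> 0}" by (auto simp: psmult_def)
  hence "finite {w. psmult c p w \<noteq> 0}" using p finite_subset by (auto simp: FA_def)
  thus ?thesis using p by (auto simp: FA_def psmult_def)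
qed
lemma FA_neg: "p \<in> FA n \<Longrightarrow> - p \<in> FA n"
  using FA_smult[of p n "-1"] by (simp add: psmult_neg)
lemma FA_diff: "p \<in> FA n \<Longrightarrow> q \<in> FA n \<Longrightarrow> p - q \<in> FA n"
  by (simp only: diff_conv_add_uminus) (intro FA_add FA_neg; assumption)
lemma FA_sum: "(\<And>x. x \<in> S \<Longrightarrow> f x \<in> FA n) \<Longrightarrow> (\<Sum>x\<in>S. f x) \<in> FA n"
  by (induction S rule: infinite_finite_induct) (auto intro: FA_add)

lemma FA_support: "p \<in> FA n \<Longrightarrow> p w \<noteq> 0 \<Longrightarrow> set w \<subseteq> {1..n}"
  by (simp add: FA_def)

lemma pmult_expand:
  assumes "p \<in> FA n" "q \<in> FA n"
  shows "pmult p q = (\<Sum>u\<in>{w. p w \<noteq> 0}. \<Sum>v\<in>{w. q w \<noteq> 0}. mon (p u * q v) (u @ v))"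
proof -
  have "pmult p q = pmult (\<Sum>u\<in>{w. p w \<noteq> 0}. mon (p u) u) (\<Sum>v\<in>{w. q w \<noteq> 0}. mon (q v) v)"
    by (rule arg_cong2[OF FA_expand[OF assms(1)] FA_expand[OF assms(2)], where f=pmult])
  also have "\<dots> = (\<Sum>u\<in>{w. p w \<noteq> 0}. \<Sum>v\<in>{w. q w \<noteq> 0}. mon (p u * q v) (u @ v))"
    apply (simp only: pmult_sum_left)
    apply (simp only: pmult_sum_right pmult_mono)
    done
  finally show ?thesis .
qed

lemma FA_mult: "p \<in> FA n \<Longrightarrow> q \<in> FA n \<Longrightarrow> pmult p q \<in> FA n"
proof -
  assume p: "p \<in> FA n" and q: "q \<in> FA n"
  show ?thesis
    unfolding pmult_expand[OF p q]
  proof (intro FA_sum FA_mon)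
    fix u v assume "u \<in> {w. p w \<noteq> 0}" "v \<in> {w. q w \<noteq> 0}"
    thus "set (u @ v) \<subseteq> {1..n}" using FA_support[OF p] FA_support[OF q] by auto
  qed
qed


abbreviation "II n E \<equiv> cga_ideal n E"

lemma relators_FA: "r \<in> relators n E \<Longrightarrow> r \<in> FA n"
  unfolding relators_def
  by (auto simp: padd_eq psub_eq pgen_mono pone_mono pmult_mono intro!: FA_add FA_diff FA_mon)

lemma ideal_FA: "p \<in> II n E \<Longrightarrow> p \<in> FA n"
proof (induction rule: cga_ideal.induct)
  case zero then show ?case using FA_zero by (simp add: zero_fun_def)
next
  case (rel r) then show ?case by (rule relators_FA)
next
  case (add p q) then show ?case by (metis FA_add padd_eq)
next
  case (smult p c) then show ?case by (simp add: FA_smult)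
next
  case (lmult a p) then show ?case by (simp add: FA_mult)
next
  case (rmult a p) then show ?case by (simp add: FA_mult)
qed

lemma I_zero[simp]: "0 \<in> II n E"
  using cga_ideal.zero by (simp add: zero_fun_def)
lemma I_add: "p \<in> II n E \<Longrightarrow> q \<in> II n E \<Longrightarrow> p + q \<in> II n E"
  using cga_ideal.add by (simp add: padd_eq)
lemma I_smult: "p \<in> II n E \<Longrightarrow> psmult c p \<in> II n E"
  by (rule cga_ideal.smult)
lemma I_neg: "p \<in> II n E \<Longrightarrow> - p \<in> II n E"
  using I_smult[of p n E "-1"] by (simp only: psmult_neg)
lemma I_diff: "p \<in> II n E \<Longrightarrow> q \<in> II n E \<Longrightarrow> p - q \<in> II n E"
  by (simp only: diff_conv_add_uminus) (intro I_add I_neg; assumption)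
lemma I_lmult: "a \<in> FA n \<Longrightarrow> p \<in> II n E \<Longrightarrow> pmult a p \<in> II n E"
  by (rule cga_ideal.lmult)
lemma I_rmult: "a \<in> FA n \<Longrightarrow> p \<in> II n E \<Longrightarrow> pmult p a \<in> II n E"
  by (rule cga_ideal.rmult)
lemma I_sum: "(\<And>x. x \<in> S \<Longrightarrow> f x \<in> II n E) \<Longrightarrow> (\<Sum>x\<in>S. f x) \<in> II n E"
  by (induction S rule: infinite_finite_induct) (simp_all add: I_add del: plus_fun_apply zero_fun_apply)

definition ceq :: "nat \<Rightarrow> nat set set \<Rightarrow> ncpoly \<Rightarrow> ncpoly \<Rightarrow> bool" where
  "ceq n E p q \<longleftrightarrow> p - q \<in> II n E"

lemma ceq_refl: "ceq n E p p"
  by (simp add: ceq_def)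
lemma ceq_sym: "ceq n E p q \<Longrightarrow> ceq n E q p"
  unfolding ceq_def using I_neg by fastforce
lemma ceq_trans: "ceq n E p q \<Longrightarrow> ceq n E q r \<Longrightarrow> ceq n E p r"
  unfolding ceq_def using I_add by fastforce
lemma ceq_add: "ceq n E p p' \<Longrightarrow> ceq n E q q' \<Longrightarrow> ceq n E (p + q) (p' + q')"
proof -
  assume "ceq n E p p'" "ceq n E q q'"
  hence "(p - p') + (q - q') \<in> II n E" unfolding ceq_def by (rule I_add)
  moreover have "(p - p') + (q - q') = (p + q) - (p' + q')" by (simp add: algebra_simps)
  ultimately show ?thesis unfolding ceq_def by simp
qed
lemma ceq_smult: "ceq n E p q \<Longrightarrow> ceq n E (psmult c p) (psmult c q)"
  unfolding ceq_def by (simp add: psmult_diff[symmetric] I_smult)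
lemma ceq_mult:
  assumes "ceq n E p p'" "ceq n E q q'" "p' \<in> FA n" "q \<in> FA n"
  shows "ceq n E (pmult p q) (pmult p' q')"
proof -
  have "pmult (p - p') q + pmult p' (q - q') \<in> II n E"
    using assms unfolding ceq_def by (intro I_add I_lmult I_rmult)
  moreover have "pmult (p - p') q + pmult p' (q - q') = pmult p q - pmult p' q'"
    by (simp add: pmult_diff_left pmult_diff_right)
  ultimately show ?thesis unfolding ceq_def by simp
qed
lemma ceq_sum: "(\<And>x. x \<in> S \<Longrightarrow> ceq n E (f x) (g x)) \<Longrightarrow> ceq n E (\<Sum>x\<in>S. f x) (\<Sum>x\<in>S. g x)"
proof (induction S rule: infinite_finite_induct)
  case (insert x F)
  then show ?case by (simp del: plus_fun_apply add: ceq_add)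
qed (simp_all add: ceq_refl)
lemma ceq_I: "ceq n E p q \<Longrightarrow> p - q \<in> II n E"
  by (simp add: ceq_def)

definition sg :: "nat set set \<Rightarrow> nat \<Rightarrow> nat \<Rightarrow> complex" where
  "sg E i j = (if {i, j} \<in> E then -1 else 1)"

lemma mon_sandwich:
  "pmult (mon c u) (pmult (mon 1 [i,j] + mon d [j,i]) (mon 1 v)) = mon c (u@i#j#v) + mon (c*d) (u@j#i#v)"
  by (simp add: pmult_add_left pmult_add_right pmult_mono)

lemma swap_ceq:
  assumes "i \<in> {1..n}" "j \<in> {1..n}" "i \<noteq> j" "set u \<subseteq> {1..n}" "set v \<subseteq> {1..n}"
  shows "ceq n E (mon c (u@i#j#v)) (mon (c * sg E i j) (u@j#i#v))"
proof -
  define d :: complex where "d = - sg E i j"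
  have r: "mon 1 [i,j] + mon d [j,i] \<in> II n E"
  proof (cases "{i,j} \<in> E")
    case True
    hence "padd (pmult (pgen i) (pgen j)) (pmult (pgen j) (pgen i)) \<in> relators n E"
      using assms unfolding relators_def by blast
    thus ?thesis using True by (auto simp: d_def sg_def padd_eq pgen_mono pmult_mono intro: cga_ideal.rel)
  next
    case False
    hence "psub (pmult (pgen i) (pgen j)) (pmult (pgen j) (pgen i)) \<in> relators n E"
      using assms unfolding relators_def by blast
    hence "mon 1 [i,j] - mon 1 [j,i] \<in> II n E"
      by (auto simp: psub_eq pgen_mono pmult_mono intro: cga_ideal.rel)
    thus ?thesis using False by (simp add: d_def sg_def diff_conv_add_uminus mon_neg)
  qed
  have "pmult (mon c u) (pmult (mon 1 [i,j] + mon d [j,i]) (mon 1 v)) \<in> II n E"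
    using assms by (intro I_lmult I_rmult r FA_mon) auto
  hence "mon c (u@i#j#v) + mon (c*d) (u@j#i#v) \<in> II n E" by (simp only: mon_sandwich)
  thus ?thesis by (simp add: ceq_def d_def diff_conv_add_uminus mon_neg)
qed

lemma square_ceq:
  assumes "i \<in> {1..n}" "set u \<subseteq> {1..n}" "set v \<subseteq> {1..n}"
  shows "ceq n E (mon c (u@i#i#v)) (mon (-c) (u@v))"
proof -
  have "padd (pmult (pgen i) (pgen i)) pone \<in> relators n E"
    using assms unfolding relators_def by blast
  hence r: "mon 1 [i,i] + mon 1 [] \<in> II n E"
    by (auto simp: padd_eq pgen_mono pone_mono pmult_mono intro: cga_ideal.rel)
  have "pmult (mon c u) (pmult (mon 1 [i,i] + mon 1 []) (mon 1 v)) \<in> II n E"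
    using assms by (intro I_lmult I_rmult r FA_mon) auto
  hence "mon c (u@i#i#v) + mon c (u@v) \<in> II n E"
    by (simp add: pmult_add_left pmult_add_right pmult_mono)
  thus ?thesis by (simp add: ceq_def diff_conv_add_uminus mon_neg)
qed

fun nf_ins :: "nat set set \<Rightarrow> nat \<Rightarrow> nat list \<Rightarrow> complex \<times> nat list" where
  "nf_ins E i [] = (1, [i])"
| "nf_ins E i (j#w) = (if i < j then (1, i#j#w) else if i = j then (-1, w)
     else (case nf_ins E i w of (s, w') \<Rightarrow> (sg E i j * s, j#w')))"

fun nf :: "nat set set \<Rightarrow> nat list \<Rightarrow> complex \<times> nat list" where
  "nf E [] = (1, [])"
| "nf E (i#w) = (case nf E w of (s, w') \<Rightarrow> (case nf_ins E i w' of (t, w'') \<Rightarrow> (s*t, w'')))"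

lemma nf_ins_set: "set (snd (nf_ins E i w)) \<subseteq> insert i (set w)"
  by (induction E i w rule: nf_ins.induct) (auto split: prod.splits)

lemma nf_set: "set (snd (nf E w)) \<subseteq> set w"
  apply (induction E w rule: nf.induct)
   apply (auto split: prod.splits)
  by (metis insert_iff nf_ins_set snd_conv subsetD subset_insertI2)

lemma nf_ins_ceq:
  assumes "i \<in> {1..n}" "set u \<subseteq> {1..n}" "set w \<subseteq> {1..n}"
  shows "ceq n E (mon c (u@i#w)) (mon (c * fst (nf_ins E i w)) (u @ snd (nf_ins E i w)))"
  using assms
proof (induction E i w arbitrary: u c rule: nf_ins.induct)
  case (1 E i)
  then show ?case by (simp add: ceq_refl)
next
  case (2 E i j w)
  show ?case
  proof (cases "i < j")
    case True then show ?thesis by (simp add: ceq_refl)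
  next
    case False
    show ?thesis
    proof (cases "i = j")
      case True
      then show ?thesis using 2(2-4) square_ceq[of i n u w E c] by simp
    next
      case ne: False
      obtain s w' where sw: "nf_ins E i w = (s, w')" by fastforce
      have "ceq n E (mon c (u@i#j#w)) (mon (c * sg E i j) (u@j#i#w))"
        using 2(2-4) ne by (intro swap_ceq) auto
      moreover have "ceq n E (mon (c * sg E i j) ((u@[j])@i#w)) (mon (c * sg E i j * s) ((u@[j]) @ w'))"
        using 2(1)[OF False ne, of "u@[j]" "c * sg E i j"] 2(2-4) sw by auto
      ultimately show ?thesis using False ne sw by (auto intro: ceq_trans simp: mult.assoc)
    qed
  qed
qed

lemma nf_ceq:
  assumes "set u \<subseteq> {1..n}" "set w \<subseteq> {1..n}"
  shows "ceq n E (mon c (u@w)) (mon (c * fst (nf E w)) (u @ snd (nf E w)))"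
  using assms
proof (induction E w arbitrary: u c rule: nf.induct)
  case (1 E)
  then show ?case by (simp add: ceq_refl)
next
  case (2 E i w)
  obtain s w' where sw: "nf E w = (s, w')" by fastforce
  obtain t w'' where tw: "nf_ins E i w' = (t, w'')" by fastforce
  have w': "set w' \<subseteq> {1..n}" using nf_set[of E w] sw 2(3) by auto
  have "ceq n E (mon c ((u@[i])@w)) (mon (c * s) ((u@[i]) @ w'))"
    using 2(1)[of "u@[i]" c] 2(2,3) sw by auto
  moreover have "ceq n E (mon (c*s) (u@i#w')) (mon (c * s * t) (u @ w''))"
    using nf_ins_ceq[of i n u w' E "c*s"] 2(2,3) w' tw by auto
  ultimately show ?case using sw tw by (auto intro: ceq_trans simp: mult.assoc)
qed

lemma nf_check:
  assumes "set w1 \<subseteq> {1..n}" "set w2 \<subseteq> {1..n}"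
    "nf E w1 = (s1, x)" "nf E w2 = (s2, x)" "c1 * s1 + c2 * s2 = 0"
  shows "mon c1 w1 + mon c2 w2 \<in> II n E"
proof -
  have "ceq n E (mon c1 w1) (mon (c1 * s1) x)" using nf_ceq[of "[]" n w1 E c1] assms by simp
  moreover have "ceq n E (mon c2 w2) (mon (c2 * s2) x)" using nf_ceq[of "[]" n w2 E c2] assms by simp
  ultimately have "ceq n E (mon c1 w1 + mon c2 w2) (mon (c1 * s1) x + mon (c2 * s2) x)"
    by (rule ceq_add)
  thus ?thesis using assms(5) by (simp add: mon_add ceq_def)
qed

lemma nf_check1:
  assumes "set w1 \<subseteq> {1..n}" "set w2 \<subseteq> {1..n}"
    "nf E w1 = (s1, x)" "nf E w2 = (s2, x)" "c1 * s1 = c2 * s2"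
  shows "ceq n E (mon c1 w1) (mon c2 w2)"
proof -
  have "ceq n E (mon c1 w1) (mon (c1 * s1) x)" using nf_ceq[of "[]" n w1 E c1] assms by simp
  moreover have "ceq n E (mon c2 w2) (mon (c2 * s2) x)" using nf_ceq[of "[]" n w2 E c2] assms by simp
  ultimately show ?thesis using assms(5) by (metis ceq_sym ceq_trans)
qed


definition Cw :: "(nat \<Rightarrow> complex) \<Rightarrow> nat list \<Rightarrow> complex" where
  "Cw C w = prod_list (map C w)"
definition Ww :: "(nat \<Rightarrow> nat list) \<Rightarrow> nat list \<Rightarrow> nat list" where
  "Ww W w = concat (map W w)"
definition subst :: "(nat \<Rightarrow> complex) \<Rightarrow> (nat \<Rightarrow> nat list) \<Rightarrow> ncpoly \<Rightarrow> ncpoly" where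
  "subst C W p = (\<Sum>w\<in>{w. p w \<noteq> 0}. mon (p w * Cw C w) (Ww W w))"

lemma Cw_append[simp]: "Cw C (u@v) = Cw C u * Cw C v" by (simp add: Cw_def)
lemma Ww_append[simp]: "Ww W (u@v) = Ww W u @ Ww W v" by (simp add: Ww_def)
lemma Cw_simps[simp]: "Cw C [] = 1" "Cw C (i#w) = C i * Cw C w" by (simp_all add: Cw_def)
lemma Ww_simps[simp]: "Ww W [] = []" "Ww W (i#w) = W i @ Ww W w" by (simp_all add: Ww_def)

lemma subst_expand:
  assumes "finite S" "{w. p w \<noteq> 0} \<subseteq> S"
  shows "subst C W p = (\<Sum>w\<in>S. mon (p w * Cw C w) (Ww W w))"
  unfolding subst_def
  by (rule sum.mono_neutral_left) (use assms in auto)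

lemma psmult_apply: "psmult c p w = c * p w" by (simp add: psmult_def)
lemma psmult_zero_left: "psmult 0 p = 0" by (simp add: psmult_def fun_eq_iff)

lemma fs_add: "fs p \<Longrightarrow> fs q \<Longrightarrow> fs (p + q)"
proof -
  assume "fs p" "fs q"
  moreover have "{w. (p+q) w \<noteq> 0} \<subseteq> {w. p w \<noteq> 0} \<union> {w. q w \<noteq> 0}" by auto
  ultimately show ?thesis unfolding fs_def using finite_subset by blast
qed
lemma FA_fs: "p \<in> FA n \<Longrightarrow> fs p" by (simp add: FA_iff)

lemma subst_add: "fs p \<Longrightarrow> fs q \<Longrightarrow> subst C W (p + q) = subst C W p + subst C W q"
proof -
  assume p: "fs p" and q: "fs q"
  let ?S = "{w. p w \<noteq> 0} \<union> {w. q w \<noteq> 0}"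
  have f: "finite ?S" using p q by (simp add: fs_def)
  have "subst C W (p + q) = (\<Sum>w\<in>?S. mon ((p+q) w * Cw C w) (Ww W w))"
    by (rule subst_expand[OF f]) auto
  also have "\<dots> = (\<Sum>w\<in>?S. mon (p w * Cw C w) (Ww W w) + mon (q w * Cw C w) (Ww W w))"
    by (rule sum.cong) (simp_all only: mon_add plus_fun_apply distrib_right)
  also have "\<dots> = (\<Sum>w\<in>?S. mon (p w * Cw C w) (Ww W w)) + (\<Sum>w\<in>?S. mon (q w * Cw C w) (Ww W w))"
    by (rule sum.distrib)
  also have "\<dots> = subst C W p + subst C W q"
  proof -
    have e1: "subst C W p = (\<Sum>w\<in>?S. mon (p w * Cw C w) (Ww W w))"
      by (rule subst_expand[OF f]) auto
    have e2: "subst C W q = (\<Sum>w\<in>?S. mon (q w * Cw C w) (Ww W w))"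
      by (rule subst_expand[OF f]) auto
    show ?thesis by (simp only: e1 e2)
  qed
  finally show ?thesis .
qed

lemma subst_smult: "fs p \<Longrightarrow> subst C W (psmult c p) = psmult c (subst C W p)"
proof -
  assume p: "fs p"
  let ?S = "{w. p w \<noteq> 0}"
  have f: "finite ?S" using p by (simp add: fs_def)
  have "subst C W (psmult c p) = (\<Sum>w\<in>?S. mon (psmult c p w * Cw C w) (Ww W w))"
    by (rule subst_expand[OF f]) (auto simp: psmult_apply)
  also have "\<dots> = psmult c (subst C W p)"
    unfolding subst_def psmult_sum by (rule sum.cong) (simp_all add: psmult_apply mult.assoc)
  finally show ?thesis .
qed

lemma subst_mon: "subst C W (mon c w) = mon (c * Cw C w) (Ww W w)"
proof -
  have "subst C W (mon c w) = (\<Sum>u\<in>{w}. mon (mon c w u * Cw C u) (Ww W u))"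
    by (rule subst_expand) (auto simp: mon_def)
  thus ?thesis by (simp add: mon_def)
qed

lemma fs_mon: "fs (mon c w)"
proof -
  have "{u. mon c w u \<noteq> 0} \<subseteq> {w}" by (auto simp: mon_def)
  thus ?thesis unfolding fs_def using finite_subset by blast
qed

lemma fs_sum: "(\<And>x. x \<in> S \<Longrightarrow> fs (f x)) \<Longrightarrow> fs (\<Sum>x\<in>S. f x)"
proof (induction S rule: infinite_finite_induct)
  case (infinite A) then show ?case by (simp add: fs_def)
next
  case empty then show ?case by (simp add: fs_def)
next
  case (insert x F) then show ?case by (simp del: plus_fun_apply add: fs_add)
qed

lemma subst_sum: "(\<And>x. x \<in> S \<Longrightarrow> fs (f x)) \<Longrightarrow> subst C W (\<Sum>x\<in>S. f x) = (\<Sum>x\<in>S. subst C W (f x))"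
proof (induction S rule: infinite_finite_induct)
  case (infinite A) then show ?case by (simp add: subst_def)
next
  case empty then show ?case by (simp add: subst_def)
next
  case (insert x F) then show ?case by (simp del: plus_fun_apply add: subst_add fs_sum)
qed

lemma subst_mult:
  assumes p: "p \<in> FA n" and q: "q \<in> FA n"
  shows "subst C W (pmult p q) = pmult (subst C W p) (subst C W q)"
proof -
  let ?P = "{w. p w \<noteq> 0}" and ?Q = "{w. q w \<noteq> 0}"
  have "subst C W (pmult p q) = (\<Sum>u\<in>?P. \<Sum>v\<in>?Q. subst C W (mon (p u * q v) (u @ v)))"
    unfolding pmult_expand[OF p q]
    by (simp add: subst_sum fs_sum fs_mon del: plus_fun_apply)
  also have "\<dots> = (\<Sum>u\<in>?P. \<Sum>v\<in>?Q. pmult (mon (p u * Cw C u) (Ww W u)) (mon (q v * Cw C v) (Ww W v)))"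
    by (simp add: subst_mon pmult_mono mult_ac)
  also have "\<dots> = pmult (subst C W p) (subst C W q)"
    unfolding subst_def
    apply (simp only: pmult_sum_left)
    apply (simp only: pmult_sum_right)
    done
  finally show ?thesis .
qed

lemma subst_FA:
  assumes "p \<in> FA n" "\<And>i. i \<in> {1..n} \<Longrightarrow> set (W i) \<subseteq> {1..n}"
  shows "subst C W p \<in> FA n"
  unfolding subst_def
proof (intro FA_sum FA_mon)
  fix w assume "w \<in> {w. p w \<noteq> 0}"
  hence "set w \<subseteq> {1..n}" using FA_support[OF assms(1)] by auto
  hence "\<And>a. a \<in> set w \<Longrightarrow> set (W a) \<subseteq> {1..n}" using assms(2) by blast
  thus "set (Ww W w) \<subseteq> {1..n}" by (simp add: Ww_def UN_subset_iff)
qed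

definition hom :: "nat \<Rightarrow> (ncpoly \<Rightarrow> ncpoly) \<Rightarrow> bool" where
  "hom n h \<longleftrightarrow> (\<forall>p\<in>FA n. h p \<in> FA n)
     \<and> (\<forall>p\<in>FA n. \<forall>q\<in>FA n. h (p + q) = h p + h q \<and> h (pmult p q) = pmult (h p) (h q))
     \<and> (\<forall>p\<in>FA n. \<forall>c. h (psmult c p) = psmult c (h p))
     \<and> h pone = pone"

lemma hom_subst:
  assumes "\<And>i. i \<in> {1..n} \<Longrightarrow> set (W i) \<subseteq> {1..n}"
  shows "hom n (subst C W)"
  unfolding hom_def
proof (intro conjI ballI allI)
  fix p q assume p: "p \<in> FA n" and q: "q \<in> FA n"
  show "subst C W p \<in> FA n" using subst_FA[OF p assms] .
  show "subst C W (p + q) = subst C W p + subst C W q" using subst_add[OF FA_fs[OF p] FA_fs[OF q]] .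
  show "subst C W (pmult p q) = pmult (subst C W p) (subst C W q)" using subst_mult[OF p q] .
next
  fix p c assume p: "p \<in> FA n"
  show "subst C W (psmult c p) = psmult c (subst C W p)" using subst_smult[OF FA_fs[OF p]] .
next
  show "subst C W pone = pone" by (simp add: pone_mono subst_mon)
qed

lemma hom_FA: "hom n h \<Longrightarrow> p \<in> FA n \<Longrightarrow> h p \<in> FA n" by (simp add: hom_def)
lemma hom_add: "hom n h \<Longrightarrow> p \<in> FA n \<Longrightarrow> q \<in> FA n \<Longrightarrow> h (p + q) = h p + h q" by (simp add: hom_def)
lemma hom_mult: "hom n h \<Longrightarrow> p \<in> FA n \<Longrightarrow> q \<in> FA n \<Longrightarrow> h (pmult p q) = pmult (h p) (h q)" by (simp add: hom_def)
lemma hom_smult: "hom n h \<Longrightarrow> p \<in> FA n \<Longrightarrow> h (psmult c p) = psmult c (h p)" by (simp add: hom_def)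
lemma hom_one: "hom n h \<Longrightarrow> h pone = pone" by (simp add: hom_def)
lemma hom_zero: "hom n h \<Longrightarrow> h 0 = 0"
  using hom_smult[of n h 0 0] by (simp add: psmult_zero_left)
lemma hom_diff: "hom n h \<Longrightarrow> p \<in> FA n \<Longrightarrow> q \<in> FA n \<Longrightarrow> h (p - q) = h p - h q"
proof -
  assume h: "hom n h" and p: "p \<in> FA n" and q: "q \<in> FA n"
  have "h (p - q) = h (p + psmult (-1) q)" by (simp add: psmult_neg)
  also have "\<dots> = h p + psmult (-1) (h q)"
    by (simp only: hom_add[OF h p FA_smult[OF q]] hom_smult[OF h q])
  finally show ?thesis by (simp add: psmult_neg)
qed
lemma hom_sum: "hom n h \<Longrightarrow> (\<And>x. x \<in> S \<Longrightarrow> f x \<in> FA n) \<Longrightarrow> h (\<Sum>x\<in>S. f x) = (\<Sum>x\<in>S. h (f x))"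
proof (induction S rule: infinite_finite_induct)
  case (infinite A)
  have "sum f A = 0" "(\<Sum>x\<in>A. h (f x)) = 0" using infinite(1) by simp_all
  thus ?case using hom_zero[OF infinite(2)] by (simp only:)
next
  case empty then show ?case by (simp only: sum.empty hom_zero)
next
  case (insert x F) then show ?case by (simp del: plus_fun_apply add: hom_add FA_sum)
qed

lemma hom_comp: "hom n h \<Longrightarrow> hom n g \<Longrightarrow> hom n (g \<circ> h)"
  unfolding hom_def by (auto)

lemma hom_ideal:
  assumes h: "hom n h" and r: "\<And>r. r \<in> relators n E \<Longrightarrow> h r \<in> II n E'"
    and p: "p \<in> II n E"
  shows "h p \<in> II n E'"
  using p
proof (induction rule: cga_ideal.induct)
  case zero
  have "(\<lambda>w::nat list. 0::complex) = 0" by (simp add: zero_fun_def)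
  then show ?case using hom_zero[OF h] by simp
next
  case (rel r) then show ?case by (rule r)
next
  case (add p q)
  have "h (padd p q) = h p + h q"
    using hom_add[OF h ideal_FA[OF add.hyps(1)] ideal_FA[OF add.hyps(2)]] by (simp only: padd_eq)
  then show ?case using I_add[OF add.IH(1) add.IH(2)] by (simp only:)
next
  case (smult p c)
  then show ?case using h by (simp add: hom_smult ideal_FA I_smult)
next
  case (lmult a p)
  then show ?case using h by (simp add: hom_mult ideal_FA I_lmult hom_FA)
next
  case (rmult a p)
  then show ?case using h by (simp add: hom_mult ideal_FA I_rmult hom_FA)
qed

lemma hom_ceq:
  assumes h: "hom n h" and r: "\<And>p. p \<in> II n E \<Longrightarrow> h p \<in> II n E'"
    and "p \<in> FA n" "q \<in> FA n" "ceq n E p q"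
  shows "ceq n E' (h p) (h q)"
  using assms unfolding ceq_def by (simp add: hom_diff[symmetric])

lemma hom_id_ceq:
  assumes h: "hom n h" and g: "\<And>i. i \<in> {1..n} \<Longrightarrow> ceq n E (h (mon 1 [i])) (mon 1 [i])"
    and p: "p \<in> FA n"
  shows "ceq n E (h p) p"
proof -
  have w: "ceq n E (h (mon 1 w)) (mon 1 w)" if "set w \<subseteq> {1..n}" for w
    using that
  proof (induction w)
    case Nil then show ?case using hom_one[OF h] by (simp add: pone_mono ceq_refl)
  next
    case (Cons i w)
    have e: "mon 1 (i#w) = pmult (mon 1 [i]) (mon 1 w)" by (simp add: pmult_mono)
    have fi: "mon 1 [i] \<in> FA n" "mon 1 w \<in> FA n"
      by (rule FA_mon, use Cons.prems in simp)+
    have "ceq n E (pmult (h (mon 1 [i])) (h (mon 1 w))) (pmult (mon 1 [i]) (mon 1 w))"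
      by (rule ceq_mult) (use g Cons.IH Cons.prems fi h hom_FA in auto)
    thus ?case using e hom_mult[OF h fi] by simp
  qed
  let ?S = "{w. p w \<noteq> 0}"
  have e: "p = (\<Sum>w\<in>?S. psmult (p w) (mon 1 w))"
    by (simp only: psmult_mon mult_1_right) (rule FA_expand[OF p])
  have fa: "\<And>w. w \<in> ?S \<Longrightarrow> psmult (p w) (mon 1 w) \<in> FA n"
    by (intro FA_smult FA_mon) (use FA_support[OF p] in blast)
  have "h p = (\<Sum>w\<in>?S. h (psmult (p w) (mon 1 w)))"
    by (subst e, rule hom_sum[OF h fa])
  also have "\<dots> = (\<Sum>w\<in>?S. psmult (p w) (h (mon 1 w)))"
    by (rule sum.cong[OF refl], rule hom_smult[OF h], rule FA_mon) (use FA_support[OF p] in blast)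
  finally have hp: "h p = (\<Sum>w\<in>?S. psmult (p w) (h (mon 1 w)))" .
  have "ceq n E (\<Sum>w\<in>?S. psmult (p w) (h (mon 1 w))) (\<Sum>w\<in>?S. psmult (p w) (mon 1 w))"
    by (rule ceq_sum, rule ceq_smult, rule w) (use FA_support[OF p] in blast)
  thus ?thesis using hp e by simp
qed


definition good :: "nat \<Rightarrow> nat set set \<Rightarrow> nat set set \<Rightarrow> (ncpoly \<Rightarrow> ncpoly) \<Rightarrow> (ncpoly \<Rightarrow> ncpoly) \<Rightarrow> bool" where
  "good n E E' \<rho> \<kappa> \<longleftrightarrow> hom n \<rho> \<and> hom n \<kappa> \<and> (\<forall>p\<in>II n E. \<rho> p \<in> II n E') \<and> (\<forall>q\<in>II n E'. \<kappa> q \<in> II n E)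
     \<and> (\<forall>p\<in>FA n. ceq n E (\<kappa> (\<rho> p)) p) \<and> (\<forall>q\<in>FA n. ceq n E' (\<rho> (\<kappa> q)) q)"

lemma good_sym: "good n E E' \<rho> \<kappa> \<Longrightarrow> good n E' E \<kappa> \<rho>"
  unfolding good_def by auto

lemma good_trans:
  assumes g1: "good n E E1 \<rho>1 \<kappa>1" and g2: "good n E1 E2 \<rho>2 \<kappa>2"
  shows "good n E E2 (\<rho>2 \<circ> \<rho>1) (\<kappa>1 \<circ> \<kappa>2)"
proof -
  from g1 have h1: "hom n \<rho>1" "hom n \<kappa>1" and i1: "\<And>p. p \<in> II n E \<Longrightarrow> \<rho>1 p \<in> II n E1" "\<And>q. q \<in> II n E1 \<Longrightarrow> \<kappa>1 q \<in> II n E"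
    and c1: "\<And>p. p \<in> FA n \<Longrightarrow> ceq n E (\<kappa>1 (\<rho>1 p)) p" "\<And>q. q \<in> FA n \<Longrightarrow> ceq n E1 (\<rho>1 (\<kappa>1 q)) q"
    unfolding good_def by auto
  from g2 have h2: "hom n \<rho>2" "hom n \<kappa>2" and i2: "\<And>p. p \<in> II n E1 \<Longrightarrow> \<rho>2 p \<in> II n E2" "\<And>q. q \<in> II n E2 \<Longrightarrow> \<kappa>2 q \<in> II n E1"
    and c2: "\<And>p. p \<in> FA n \<Longrightarrow> ceq n E1 (\<kappa>2 (\<rho>2 p)) p" "\<And>q. q \<in> FA n \<Longrightarrow> ceq n E2 (\<rho>2 (\<kappa>2 q)) q"
    unfolding good_def by auto
  have a: "ceq n E (\<kappa>1 (\<kappa>2 (\<rho>2 (\<rho>1 p)))) p" if p: "p \<in> FA n" for p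
  proof -
    have "ceq n E (\<kappa>1 (\<kappa>2 (\<rho>2 (\<rho>1 p)))) (\<kappa>1 (\<rho>1 p))"
      by (rule hom_ceq[OF h1(2) i1(2)]) (use p h1 h2 hom_FA c2 in auto)
    thus ?thesis using c1(1)[OF p] by (rule ceq_trans)
  qed
  have b: "ceq n E2 (\<rho>2 (\<rho>1 (\<kappa>1 (\<kappa>2 q)))) q" if q: "q \<in> FA n" for q
  proof -
    have "ceq n E2 (\<rho>2 (\<rho>1 (\<kappa>1 (\<kappa>2 q)))) (\<rho>2 (\<kappa>2 q))"
      by (rule hom_ceq[OF h2(1) i2(1)]) (use q h1 h2 hom_FA c1 in auto)
    thus ?thesis using c2(2)[OF q] by (rule ceq_trans)
  qed
  show ?thesis unfolding good_def using h1 h2 i1 i2 a b by (auto intro: hom_comp)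
qed

lemma class_mem: "p \<in> FA n \<Longrightarrow> p \<in> cga_class n E p"
  by (simp add: cga_class_def psub_eq)

lemma class_memD: "a \<in> cga_class n E p \<Longrightarrow> a \<in> FA n \<and> ceq n E p a"
  by (simp add: cga_class_def psub_eq ceq_def)

lemma class_eq_iff:
  assumes "p \<in> FA n" "q \<in> FA n"
  shows "cga_class n E p = cga_class n E q \<longleftrightarrow> ceq n E p q"
proof
  assume "cga_class n E p = cga_class n E q"
  hence "q \<in> cga_class n E p" using class_mem[OF assms(2)] by simp
  thus "ceq n E p q" using class_memD by blast
next
  assume pq: "ceq n E p q"
  show "cga_class n E p = cga_class n E q"
  proof (intro set_eqI iffI)
    fix x assume "x \<in> cga_class n E p"
    hence "x \<in> FA n" "ceq n E p x" using class_memD by blast+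
    moreover hence "ceq n E q x" using pq ceq_sym ceq_trans by blast
    ultimately show "x \<in> cga_class n E q" by (simp add: cga_class_def psub_eq ceq_def)
  next
    fix x assume "x \<in> cga_class n E q"
    hence "x \<in> FA n" "ceq n E q x" using class_memD by blast+
    moreover hence "ceq n E p x" using pq ceq_sym ceq_trans by blast
    ultimately show "x \<in> cga_class n E p" by (simp add: cga_class_def psub_eq ceq_def)
  qed
qed

lemma pone_FA: "pone \<in> FA n" by (simp add: pone_mono FA_mon)

lemma good_iso:
  assumes g: "good n E E' \<rho> \<kappa>"
  shows "cga_isomorphic n E E'"
proof -
  from g have h: "hom n \<rho>" "hom n \<kappa>" and i: "\<And>p. p \<in> II n E \<Longrightarrow> \<rho> p \<in> II n E'" "\<And>q. q \<in> II n E' \<Longrightarrow> \<kappa> q \<in> II n E"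
    and c: "\<And>p. p \<in> FA n \<Longrightarrow> ceq n E (\<kappa> (\<rho> p)) p" "\<And>q. q \<in> FA n \<Longrightarrow> ceq n E' (\<rho> (\<kappa> q)) q"
    unfolding good_def by auto
  define \<Phi> where "\<Phi> C = cga_class n E' (\<rho> (SOME p. p \<in> C))" for C
  have Phi: "\<Phi> (cga_class n E p) = cga_class n E' (\<rho> p)" if p: "p \<in> FA n" for p
  proof -
    let ?x = "SOME x. x \<in> cga_class n E p"
    have "?x \<in> cga_class n E p" using class_mem[OF p, where E=E] by (rule someI[where P="\<lambda>x. x \<in> cga_class n E p"])
    hence x: "?x \<in> FA n" "ceq n E p ?x" using class_memD by blast+
    have "ceq n E' (\<rho> p) (\<rho> ?x)" by (rule hom_ceq[OF h(1) i(1) p x(1) x(2)])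
    hence "cga_class n E' (\<rho> ?x) = cga_class n E' (\<rho> p)"
      using class_eq_iff[of "\<rho> ?x" n "\<rho> p" E'] hom_FA[OF h(1)] x p ceq_sym by blast
    thus ?thesis by (simp add: \<Phi>_def)
  qed
  have inj: "inj_on \<Phi> (cga_carrier n E)"
  proof (rule inj_onI)
    fix C1 C2 assume "C1 \<in> cga_carrier n E" "C2 \<in> cga_carrier n E" and eq: "\<Phi> C1 = \<Phi> C2"
    then obtain p q where p: "p \<in> FA n" "C1 = cga_class n E p" and q: "q \<in> FA n" "C2 = cga_class n E q"
      unfolding cga_carrier_def by blast
    have "cga_class n E' (\<rho> p) = cga_class n E' (\<rho> q)" using eq p q Phi by simp
    hence "ceq n E' (\<rho> p) (\<rho> q)" using class_eq_iff hom_FA[OF h(1)] p q by blast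
    hence "ceq n E (\<kappa> (\<rho> p)) (\<kappa> (\<rho> q))" using hom_ceq[OF h(2) i(2) hom_FA[OF h(1) p(1)] hom_FA[OF h(1) q(1)]] by blast
    hence "ceq n E p q" using c(1)[OF p(1)] c(1)[OF q(1)] ceq_sym ceq_trans by blast
    thus "C1 = C2" using p q class_eq_iff by blast
  qed
  have img: "\<Phi> ` cga_carrier n E = cga_carrier n E'"
  proof (intro set_eqI iffI)
    fix C assume "C \<in> \<Phi> ` cga_carrier n E"
    then obtain p where "p \<in> FA n" "C = \<Phi> (cga_class n E p)" unfolding cga_carrier_def by blast
    thus "C \<in> cga_carrier n E'" using Phi hom_FA[OF h(1)] unfolding cga_carrier_def by auto
  next
    fix C assume "C \<in> cga_carrier n E'"
    then obtain q where q: "q \<in> FA n" "C = cga_class n E' q" unfolding cga_carrier_def by blast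
    have kq: "\<kappa> q \<in> FA n" using hom_FA[OF h(2) q(1)] .
    have "cga_class n E' (\<rho> (\<kappa> q)) = cga_class n E' q"
      using class_eq_iff[of "\<rho> (\<kappa> q)" n q E'] hom_FA[OF h(1) kq] q c(2) by blast
    hence "C = \<Phi> (cga_class n E (\<kappa> q))" using Phi[OF kq] q by simp
    thus "C \<in> \<Phi> ` cga_carrier n E" using kq unfolding cga_carrier_def by blast
  qed
  have cls: "cga_class n E' x = cga_class n E' a" if "a \<in> cga_class n E' x" "x \<in> FA n" for a x
    using that class_memD class_eq_iff by blast
  have "cga_iso_map n E E' \<Phi>"
    unfolding cga_iso_map_def
  proof (intro conjI ballI allI impI)
    show "bij_betw \<Phi> (cga_carrier n E) (cga_carrier n E')" using inj img by (simp add: bij_betw_def)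
    show "\<Phi> (cga_class n E pone) = cga_class n E' pone" using Phi[OF pone_FA] hom_one[OF h(1)] by simp
  next
    fix p q a b assume p: "p \<in> FA n" and q: "q \<in> FA n"
      and a: "a \<in> \<Phi> (cga_class n E p)" and b: "b \<in> \<Phi> (cga_class n E q)"
    have a': "a \<in> FA n" "ceq n E' (\<rho> p) a" using a Phi[OF p] class_memD by auto
    have b': "b \<in> FA n" "ceq n E' (\<rho> q) b" using b Phi[OF q] class_memD by auto
    have rp: "\<rho> p \<in> FA n" "\<rho> q \<in> FA n" using hom_FA[OF h(1)] p q by auto
    have "\<Phi> (cga_class n E (padd p q)) = cga_class n E' (\<rho> p + \<rho> q)"
      using Phi[OF FA_add[OF p q]] hom_add[OF h(1) p q] by (simp add: padd_eq)
    also have "\<dots> = cga_class n E' (padd a b)"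
      unfolding padd_eq using class_eq_iff[of "\<rho> p + \<rho> q" n "a + b" E'] FA_add a' b' rp ceq_add by blast
    finally show "\<Phi> (cga_class n E (padd p q)) = cga_class n E' (padd a b)" .
    have "\<Phi> (cga_class n E (pmult p q)) = cga_class n E' (pmult (\<rho> p) (\<rho> q))"
      using Phi[OF FA_mult[OF p q]] hom_mult[OF h(1) p q] by simp
    also have "\<dots> = cga_class n E' (pmult a b)"
      using class_eq_iff[of "pmult (\<rho> p) (\<rho> q)" n "pmult a b" E'] FA_mult a' b' rp ceq_mult by blast
    finally show "\<Phi> (cga_class n E (pmult p q)) = cga_class n E' (pmult a b)" .
  next
    fix p a c assume p: "p \<in> FA n" and a: "a \<in> \<Phi> (cga_class n E p)"
    have a': "a \<in> FA n" "ceq n E' (\<rho> p) a" using a Phi[OF p] class_memD by auto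
    have "\<Phi> (cga_class n E (psmult c p)) = cga_class n E' (psmult c (\<rho> p))"
      using Phi[OF FA_smult[OF p]] hom_smult[OF h(1) p] by simp
    also have "\<dots> = cga_class n E' (psmult c a)"
      using class_eq_iff[of "psmult c (\<rho> p)" n "psmult c a" E'] FA_smult a' hom_FA[OF h(1) p] ceq_smult by blast
    finally show "\<Phi> (cga_class n E (psmult c p)) = cga_class n E' (psmult c a)" .
  qed
  thus ?thesis unfolding cga_isomorphic_def by blast
qed


lemma subst_pgen: "subst C W (pgen i) = mon (C i) (W i)"
  by (simp add: pgen_mono subst_mon)

lemma FA_pgen: "i \<in> {1..n} \<Longrightarrow> pgen i \<in> FA n"
  by (simp add: pgen_mono FA_mon)

lemma rel_ok:
  assumes W: "\<And>i. i \<in> {1..n} \<Longrightarrow> set (W i) \<subseteq> {1..n}"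
    and H1: "\<And>i. i \<in> {1..n} \<Longrightarrow> mon (C i * C i) (W i @ W i) + mon 1 [] \<in> II n E'"
    and H2: "\<And>i j. i \<in> {1..n} \<Longrightarrow> j \<in> {1..n} \<Longrightarrow> i \<noteq> j \<Longrightarrow>
       mon (C i * C j) (W i @ W j) + mon (- sg E i j * (C j * C i)) (W j @ W i) \<in> II n E'"
    and r: "r \<in> relators n E"
  shows "subst C W r \<in> II n E'"
proof -
  have h: "hom n (subst C W)" using hom_subst W by blast
  have m: "subst C W (pmult (pgen i) (pgen j)) = mon (C i * C j) (W i @ W j)"
    if "i \<in> {1..n}" "j \<in> {1..n}" for i j
    using hom_mult[OF h FA_pgen[OF that(1)] FA_pgen[OF that(2)]] by (simp add: subst_pgen pmult_mono)
  have fm: "pmult (pgen i) (pgen j) \<in> FA n" if "i \<in> {1..n}" "j \<in> {1..n}" for i j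
    using FA_mult FA_pgen that by blast
  from r show ?thesis
    unfolding relators_def
  proof (elim UnE CollectE exE conjE)
    fix i assume e: "r = padd (pmult (pgen i) (pgen i)) pone" and i: "i \<in> {1..n}"
    have "subst C W r = mon (C i * C i) (W i @ W i) + mon 1 []"
      unfolding e padd_eq using hom_add[OF h fm[OF i i] pone_FA] m[OF i i] hom_one[OF h]
      by (simp add: pone_mono)
    thus ?thesis using H1[OF i] by simp
  next
    fix i j assume e: "r = padd (pmult (pgen i) (pgen j)) (pmult (pgen j) (pgen i))"
      and i: "i \<in> {1..n}" and j: "j \<in> {1..n}" and ne: "i \<noteq> j" and ed: "{i, j} \<in> E"
    have "subst C W r = mon (C i * C j) (W i @ W j) + mon (C j * C i) (W j @ W i)"
      unfolding e padd_eq using hom_add[OF h fm[OF i j] fm[OF j i]] m[OF i j] m[OF j i] by simp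
    thus ?thesis using H2[OF i j ne] ed by (simp add: sg_def)
  next
    fix i j assume e: "r = psub (pmult (pgen i) (pgen j)) (pmult (pgen j) (pgen i))"
      and i: "i \<in> {1..n}" and j: "j \<in> {1..n}" and ne: "i \<noteq> j" and ed: "{i, j} \<notin> E"
    have "subst C W r = mon (C i * C j) (W i @ W j) - mon (C j * C i) (W j @ W i)"
      unfolding e psub_eq using hom_diff[OF h fm[OF i j] fm[OF j i]] m[OF i j] m[OF j i] by simp
    thus ?thesis using H2[OF i j ne] ed by (simp add: sg_def diff_conv_add_uminus mon_neg)
  qed
qed

lemma good_subst:
  assumes W: "\<And>i. i \<in> {1..n} \<Longrightarrow> set (W i) \<subseteq> {1..n}"
    and W': "\<And>i. i \<in> {1..n} \<Longrightarrow> set (W' i) \<subseteq> {1..n}"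
    and R: "\<And>r. r \<in> relators n E \<Longrightarrow> subst C W r \<in> II n E'"
    and R': "\<And>r. r \<in> relators n E' \<Longrightarrow> subst C' W' r \<in> II n E"
    and T: "\<And>i. i \<in> {1..n} \<Longrightarrow> ceq n E (mon (C i * Cw C' (W i)) (Ww W' (W i))) (mon 1 [i])"
    and T': "\<And>i. i \<in> {1..n} \<Longrightarrow> ceq n E' (mon (C' i * Cw C (W' i)) (Ww W (W' i))) (mon 1 [i])"
  shows "good n E E' (subst C W) (subst C' W')"
proof -
  have h: "hom n (subst C W)" "hom n (subst C' W')" using hom_subst W W' by blast+
  have i1: "subst C W p \<in> II n E'" if "p \<in> II n E" for p by (rule hom_ideal[OF h(1) R that])
  have i2: "subst C' W' p \<in> II n E" if "p \<in> II n E'" for p by (rule hom_ideal[OF h(2) R' that])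
  have c1: "ceq n E (subst C' W' (subst C W p)) p" if "p \<in> FA n" for p
    using hom_id_ceq[OF hom_comp[OF h(1) h(2)] _ that] T by (simp add: subst_mon)
  have c2: "ceq n E' (subst C W (subst C' W' p)) p" if "p \<in> FA n" for p
    using hom_id_ceq[OF hom_comp[OF h(2) h(1)] _ that] T' by (simp add: subst_mon)
  show ?thesis unfolding good_def using h i1 i2 c1 c2 by blast
qed

lemma perm_good:
  assumes P: "\<And>i. i \<in> {1..n} \<Longrightarrow> \<pi> i \<in> {1..n} \<and> \<pi>' i \<in> {1..n} \<and> \<pi>' (\<pi> i) = i \<and> \<pi> (\<pi>' i) = i"
    and Ed: "\<And>i j. i \<in> {1..n} \<Longrightarrow> j \<in> {1..n} \<Longrightarrow> i \<noteq> j \<Longrightarrow> ({\<pi> i, \<pi> j} \<in> E' \<longleftrightarrow> {i, j} \<in> E)"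
  shows "good n E E' (subst (\<lambda>_. 1) (\<lambda>i. [\<pi> i])) (subst (\<lambda>_. 1) (\<lambda>i. [\<pi>' i]))"
proof -
  have Ed': "{\<pi>' i, \<pi>' j} \<in> E \<longleftrightarrow> {i, j} \<in> E'" if "i \<in> {1..n}" "j \<in> {1..n}" "i \<noteq> j" for i j
  proof -
    have "\<pi>' i \<noteq> \<pi>' j" using P that by metis
    thus ?thesis using Ed[of "\<pi>' i" "\<pi>' j"] P that by simp
  qed
  have rl: "mon 1 [k, k] + mon 1 [] \<in> II n F" if "k \<in> {1..n}" for k F
  proof -
    have "padd (pmult (pgen k) (pgen k)) pone \<in> relators n F" using that unfolding relators_def by blast
    thus ?thesis by (auto simp: padd_eq pgen_mono pone_mono pmult_mono intro: cga_ideal.rel)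
  qed
  have rl2: "mon 1 [k, l] + mon (- sg F k l) [l, k] \<in> II n F" if "k \<in> {1..n}" "l \<in> {1..n}" "k \<noteq> l" for k l F
  proof (cases "{k,l} \<in> F")
    case True
    hence "padd (pmult (pgen k) (pgen l)) (pmult (pgen l) (pgen k)) \<in> relators n F"
      using that unfolding relators_def by blast
    thus ?thesis using True by (auto simp: sg_def padd_eq pgen_mono pmult_mono intro: cga_ideal.rel)
  next
    case False
    hence "psub (pmult (pgen k) (pgen l)) (pmult (pgen l) (pgen k)) \<in> relators n F"
      using that unfolding relators_def by blast
    hence "mon 1 [k, l] - mon 1 [l, k] \<in> II n F"
      by (auto simp: psub_eq pgen_mono pmult_mono intro: cga_ideal.rel)
    thus ?thesis using False by (simp add: sg_def diff_conv_add_uminus mon_neg)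
  qed
  show ?thesis
  proof (rule good_subst)
    show "set [\<pi> i] \<subseteq> {1..n}" if "i \<in> {1..n}" for i using P that by simp
    show "set [\<pi>' i] \<subseteq> {1..n}" if "i \<in> {1..n}" for i using P that by simp
    show "subst (\<lambda>_. 1) (\<lambda>i. [\<pi> i]) r \<in> II n E'" if "r \<in> relators n E" for r
    proof (rule rel_ok[OF _ _ _ that])
      show "set [\<pi> i] \<subseteq> {1..n}" if "i \<in> {1..n}" for i using P that by simp
      show "mon (1 * 1) ([\<pi> i] @ [\<pi> i]) + mon 1 [] \<in> II n E'" if "i \<in> {1..n}" for i
        using rl[of "\<pi> i" E'] P that by simp
      show "mon (1 * 1) ([\<pi> i] @ [\<pi> j]) + mon (- sg E i j * (1 * 1)) ([\<pi> j] @ [\<pi> i]) \<in> II n E'"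
        if "i \<in> {1..n}" "j \<in> {1..n}" "i \<noteq> j" for i j
      proof -
        have "\<pi> i \<noteq> \<pi> j" using P that by metis
        hence "mon 1 [\<pi> i, \<pi> j] + mon (- sg E' (\<pi> i) (\<pi> j)) [\<pi> j, \<pi> i] \<in> II n E'"
          using rl2 P that by blast
        thus ?thesis using Ed[OF that] by (simp add: sg_def)
      qed
    qed
    show "subst (\<lambda>_. 1) (\<lambda>i. [\<pi>' i]) r \<in> II n E" if "r \<in> relators n E'" for r
    proof (rule rel_ok[OF _ _ _ that])
      show "set [\<pi>' i] \<subseteq> {1..n}" if "i \<in> {1..n}" for i using P that by simp
      show "mon (1 * 1) ([\<pi>' i] @ [\<pi>' i]) + mon 1 [] \<in> II n E" if "i \<in> {1..n}" for i
        using rl[of "\<pi>' i" E] P that by simp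
      show "mon (1 * 1) ([\<pi>' i] @ [\<pi>' j]) + mon (- sg E' i j * (1 * 1)) ([\<pi>' j] @ [\<pi>' i]) \<in> II n E"
        if "i \<in> {1..n}" "j \<in> {1..n}" "i \<noteq> j" for i j
      proof -
        have "\<pi>' i \<noteq> \<pi>' j" using P that by metis
        hence "mon 1 [\<pi>' i, \<pi>' j] + mon (- sg E (\<pi>' i) (\<pi>' j)) [\<pi>' j, \<pi>' i] \<in> II n E"
          using rl2 P that by blast
        thus ?thesis using Ed'[OF that] by (simp add: sg_def)
      qed
    qed
    show "ceq n E (mon (1 * Cw (\<lambda>_. 1) [\<pi> i]) (Ww (\<lambda>i. [\<pi>' i]) [\<pi> i])) (mon 1 [i])" if "i \<in> {1..n}" for i
      using P that by (simp add: ceq_refl)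
    show "ceq n E' (mon (1 * Cw (\<lambda>_. 1) [\<pi>' i]) (Ww (\<lambda>i. [\<pi> i]) [\<pi>' i])) (mon 1 [i])" if "i \<in> {1..n}" for i
      using P that by (simp add: ceq_refl)
  qed
qed


definition sgn :: "nat set set \<Rightarrow> nat \<Rightarrow> nat \<Rightarrow> complex" where
  "sgn E a b = (if a = b then 1 else sg E a b)"

definition csign1 :: "nat set set \<Rightarrow> nat \<Rightarrow> nat list \<Rightarrow> complex" where
  "csign1 E a v = prod_list (map (sgn E a) v)"

definition csign :: "nat set set \<Rightarrow> nat list \<Rightarrow> nat list \<Rightarrow> complex" where
  "csign E u v = prod_list (map (\<lambda>a. csign1 E a v) u)"

lemma csign1_simps[simp]: "csign1 E a [] = 1" "csign1 E a (b#v) = sgn E a b * csign1 E a v"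
  by (simp_all add: csign1_def)
lemma csign_simps[simp]: "csign E [] v = 1" "csign E (a#u) v = csign1 E a v * csign E u v"
  by (simp_all add: csign_def)
lemma csign1_append[simp]: "csign1 E a (v@w) = csign1 E a v * csign1 E a w"
  by (simp add: csign1_def)
lemma csign_append[simp]: "csign E (u@u') v = csign E u v * csign E u' v"
  by (simp add: csign_def)

lemma swap_letter:
  assumes "a \<in> {1..n}" "set v \<subseteq> {1..n}" "set x \<subseteq> {1..n}" "set y \<subseteq> {1..n}"
  shows "ceq n E (mon c (x @ a # v @ y)) (mon (c * csign1 E a v) (x @ v @ a # y))"
  using assms
proof (induction v arbitrary: x c)
  case Nil then show ?case by (simp add: ceq_refl)
next
  case (Cons b v)
  have b: "b \<in> {1..n}" using Cons.prems by auto
  have s1: "ceq n E (mon c (x @ a # b # v @ y)) (mon (c * sgn E a b) (x @ b # a # v @ y))"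
  proof (cases "a = b")
    case True then show ?thesis by (simp add: sgn_def ceq_refl)
  next
    case False then show ?thesis using swap_ceq[of a n b x "v @ y" E c] Cons.prems b by (simp add: sgn_def)
  qed
  have s2: "ceq n E (mon (c * sgn E a b) ((x @ [b]) @ a # v @ y)) (mon (c * sgn E a b * csign1 E a v) ((x @ [b]) @ v @ a # y))"
    using Cons.IH[of "x @ [b]" "c * sgn E a b"] Cons.prems b by auto
  show ?case using ceq_trans[OF s1] s2 by (simp add: mult.assoc)
qed

lemma swap_words:
  assumes "set u \<subseteq> {1..n}" "set v \<subseteq> {1..n}" "set x \<subseteq> {1..n}" "set y \<subseteq> {1..n}"
  shows "ceq n E (mon c (x @ u @ v @ y)) (mon (c * csign E u v) (x @ v @ u @ y))"
  using assms
proof (induction u arbitrary: x c)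
  case Nil then show ?case by (simp add: ceq_refl)
next
  case (Cons a u)
  have a: "a \<in> {1..n}" using Cons.prems by auto
  have s1: "ceq n E (mon c ((x @ [a]) @ u @ v @ y)) (mon (c * csign E u v) ((x @ [a]) @ v @ u @ y))"
    using Cons.IH[of "x @ [a]" c] Cons.prems a by auto
  have s2: "ceq n E (mon (c * csign E u v) (x @ a # v @ (u @ y))) (mon (c * csign E u v * csign1 E a v) (x @ v @ a # u @ y))"
    using swap_letter[of a n v x "u @ y" E "c * csign E u v"] Cons.prems a by auto
  show ?case using ceq_trans[OF _ s2] s1 by (simp add: mult_ac)
qed

lemma pair_from_csign:
  assumes "set (W i) \<subseteq> {1..n}" "set (W j) \<subseteq> {1..n}" "csign E' (W i) (W j) = sg E i j"
  shows "mon (C i * C j) (W i @ W j) + mon (- sg E i j * (C j * C i)) (W j @ W i) \<in> II n E'"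
proof -
  have "ceq n E' (mon (C i * C j) (W i @ W j)) (mon (C i * C j * sg E i j) (W j @ W i))"
    using swap_words[of "W i" n "W j" "[]" "[]" E' "C i * C j"] assms by simp
  hence "mon (C i * C j) (W i @ W j) - mon (C i * C j * sg E i j) (W j @ W i) \<in> II n E'"
    by (simp add: ceq_def)
  thus ?thesis by (simp add: diff_conv_add_uminus mon_neg mult_ac)
qed

lemma sq_from_nf:
  assumes "set (W i) \<subseteq> {1..n}" "snd (nf E' (W i @ W i)) = []" "C i * C i * fst (nf E' (W i @ W i)) = -1"
  shows "mon (C i * C i) (W i @ W i) + mon 1 [] \<in> II n E'"
  by (rule nf_check[of _ n "[]" E' _ "[]" 1]) (use assms in \<open>auto intro: prod_eqI\<close>)

lemma rt_from_nf:
  assumes "set w \<subseteq> {1..n}" "i \<in> {1..n}" "snd (nf E w) = [i]" "c * fst (nf E w) = 1"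
  shows "ceq n E (mon c w) (mon 1 [i])"
  by (rule nf_check1[of _ n "[i]" E _ "[i]" 1]) (use assms in \<open>auto intro: prod_eqI\<close>)


definition al :: "nat set set \<Rightarrow> nat \<Rightarrow> bool" where "al G k \<longleftrightarrow> {1, k} \<in> G"
definition be :: "nat set set \<Rightarrow> nat \<Rightarrow> bool" where "be G k \<longleftrightarrow> {2, k} \<in> G"

definition par :: "nat set set \<Rightarrow> nat \<Rightarrow> nat \<Rightarrow> bool" where
  "par G k l \<longleftrightarrow> (({k, l} \<in> G) \<noteq> ((be G k \<and> al G l) \<noteq> (al G k \<and> be G l)))"

definition G2 :: "nat set set \<Rightarrow> nat \<Rightarrow> nat set set" where
  "G2 G n = {{1, 2}} \<union> {{k, l} | k l. k \<in> {3..n} \<and> l \<in> {3..n} \<and> k \<noteq> l \<and> par G k l}"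

definition Wk :: "nat set set \<Rightarrow> nat \<Rightarrow> nat list" where
  "Wk G i = (if i \<le> 2 then [i] else i # (if be G i then [1] else []) @ (if al G i then [2] else []))"
definition Ck :: "nat set set \<Rightarrow> nat \<Rightarrow> complex" where
  "Ck G i = (if i \<le> 2 then 1 else if al G i \<or> be G i then \<i> else 1)"
definition Wr :: "nat set set \<Rightarrow> nat \<Rightarrow> nat list" where
  "Wr G i = (if i \<le> 2 then [i] else i # (if al G i then [2] else []) @ (if be G i then [1] else []))"
definition Cr :: "nat set set \<Rightarrow> nat \<Rightarrow> complex" where
  "Cr G i = (if i \<le> 2 then 1 else if al G i \<and> be G i then - \<i> else if al G i \<or> be G i then \<i> else 1)"

lemma par_sym: "par G l k = par G k l"
  unfolding par_def by (auto simp: insert_commute)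

lemma G2_mem:
  assumes "x \<noteq> y"
  shows "{x, y} \<in> G2 G n \<longleftrightarrow> {x, y} = {1, 2} \<or> (2 < x \<and> 2 < y \<and> x \<le> n \<and> y \<le> n \<and> par G x y)"
proof
  assume "{x, y} \<in> G2 G n"
  then consider "{x,y} = {1,2}" | k l where "{x,y} = {k,l}" "k \<in> {3..n}" "l \<in> {3..n}" "par G k l"
    unfolding G2_def by blast
  thus "{x, y} = {1, 2} \<or> (2 < x \<and> 2 < y \<and> x \<le> n \<and> y \<le> n \<and> par G x y)"
  proof cases
    case 1 thus ?thesis by simp
  next
    case (2 k l)
    hence "(x = k \<and> y = l) \<or> (x = l \<and> y = k)" by (simp add: doubleton_eq_iff)
    thus ?thesis using 2 par_sym by auto
  qed
next
  assume "{x, y} = {1, 2} \<or> (2 < x \<and> 2 < y \<and> x \<le> n \<and> y \<le> n \<and> par G x y)"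
  thus "{x, y} \<in> G2 G n"
  proof
    assume "{x, y} = {1, 2}" thus ?thesis unfolding G2_def by simp
  next
    assume h: "2 < x \<and> 2 < y \<and> x \<le> n \<and> y \<le> n \<and> par G x y"
    have "x \<in> {3..n}" "y \<in> {3..n}" using h by auto
    thus ?thesis unfolding G2_def using h assms by blast
  qed
qed

lemma sg_sym: "sg E j i = sg E i j" by (simp add: sg_def insert_commute)

lemma sg_G_facts:
  "sg G i 1 = (if al G i then -1 else 1)" "sg G i 2 = (if be G i then -1 else 1)"
  by (simp_all add: sg_def al_def be_def insert_commute)

lemma sg_G2_facts:
  assumes "2 < i"
  shows "sg (G2 G n) i 1 = 1" "sg (G2 G n) i 2 = 1"
  using assms by (simp_all add: sg_def G2_mem doubleton_eq_iff)

lemma sg_G2_12: "sg (G2 G n) 2 1 = -1"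
  by (simp add: sg_def G2_def insert_commute)

lemma sg_G2_ij:
  assumes "2 < i" "2 < j" "i \<le> n" "j \<le> n" "i \<noteq> j"
  shows "sg (G2 G n) i j = (if par G i j then -1 else 1)"
  using assms by (simp add: sg_def G2_mem doubleton_eq_iff)

lemma sg_G_ij: "sg G i j = (if {i, j} \<in> G then -1 else 1)" by (simp add: sg_def)

lemma sgG2_1: "2 < i \<Longrightarrow> sg (G2 G n) i (Suc 0) = 1" "2 < i \<Longrightarrow> sg (G2 G n) i 2 = 1"
   "2 < i \<Longrightarrow> sg (G2 G n) (Suc 0) i = 1" "2 < i \<Longrightarrow> sg (G2 G n) 2 i = 1"
  using sg_G2_facts[of i G n] sg_sym by (auto simp: sg_sym)
lemma sgG2_2: "sg (G2 G n) 2 (Suc 0) = -1" "sg (G2 G n) (Suc 0) 2 = -1"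
  using sg_G2_12[of G n] sg_sym by (auto simp: sg_sym)


lemma sgG_facts:
  assumes e: "{1,2} \<in> G"
  shows "sg G i 1 = (if al G i then -1 else 1)" "sg G 1 i = (if al G i then -1 else 1)"
    "sg G i (Suc 0) = (if al G i then -1 else 1)" "sg G (Suc 0) i = (if al G i then -1 else 1)"
    "sg G i 2 = (if be G i then -1 else 1)" "sg G 2 i = (if be G i then -1 else 1)"
  by (simp_all add: sg_def al_def be_def insert_commute)

lemma sgG_12:
  assumes e: "{1,2} \<in> G"
  shows "sg G 1 2 = -1" "sg G 2 1 = -1" "sg G (Suc 0) 2 = -1" "sg G 2 (Suc 0) = -1"
  using e by (simp_all add: sg_def insert_commute)

lemma sgG2_all:
  assumes "2 < i"
  shows "sg (G2 G n) i (Suc 0) = 1" "sg (G2 G n) i 2 = 1" "sg (G2 G n) (Suc 0) i = 1" "sg (G2 G n) 2 i = 1"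
    "sg (G2 G n) i 1 = 1" "sg (G2 G n) 1 i = 1"
  using sgG2_1[OF assms, of G n] by auto

lemma sgG2_12: "sg (G2 G n) 2 (Suc 0) = -1" "sg (G2 G n) (Suc 0) 2 = -1"
    "sg (G2 G n) 2 1 = -1" "sg (G2 G n) 1 2 = -1"
  using sgG2_2[of G n] by auto

lemma big_facts:
  assumes "2 < i"
  shows "i \<noteq> 1" "i \<noteq> 2" "i \<noteq> 0" "i \<noteq> Suc 0" "\<not> i \<le> 2" "\<not> i < 1" "\<not> i < 2" "\<not> i < Suc 0"
    "1 \<noteq> i" "2 \<noteq> i" "0 \<noteq> i" "Suc 0 \<noteq> i" "1 < i" "Suc 0 < i" "\<not> i \<le> Suc 0" "\<not> i \<le> 1"
  using assms by auto

lemma three_cases: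
  assumes "(i::nat) \<in> {1..n}"
  obtains "i = 1" | "i = 2" | "2 < i" "i \<le> n"
  using assms by fastforce

lemma Wr_range: "2 \<le> n \<Longrightarrow> i \<in> {1..n} \<Longrightarrow> set (Wr G i) \<subseteq> {1..n}"
  by (auto simp: Wr_def)
lemma Wk_range: "2 \<le> n \<Longrightarrow> i \<in> {1..n} \<Longrightarrow> set (Wk G i) \<subseteq> {1..n}"
  by (auto simp: Wk_def)

lemma rho_pair_kl:
  assumes i: "2 < i" "i \<le> n" and j: "2 < j" "j \<le> n" and ij: "i \<noteq> j"
  shows "csign (G2 G n) (Wr G i) (Wr G j) = sg G i j"
proof -
  have s: "sg (G2 G n) i j = (if par G i j then -1 else 1)" "sg (G2 G n) j i = (if par G i j then -1 else 1)"
    using sg_G2_ij[of i j n G] i j ij sg_sym par_sym by auto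
  have p: "par G i j \<longleftrightarrow> (({i, j} \<in> G) \<noteq> ((be G i \<and> al G j) \<noteq> (al G i \<and> be G j)))" by (simp add: par_def)
  have g: "sg G i j = (if {i, j} \<in> G then -1 else 1)" by (simp add: sg_def)
  show ?thesis
    using big_facts[OF i(1)] big_facts[OF j(1)] ij sgG2_all[OF i(1)] sgG2_all[OF j(1)] sgG2_12 s p g
    by (cases "al G i"; cases "be G i"; cases "al G j"; cases "be G j"; simp add: Wr_def sgn_def)
qed

lemma rho_pair_k1:
  assumes e: "{1,2} \<in> G" and i: "2 < i"
  shows "csign (G2 G n) (Wr G i) (Wr G 1) = sg G i 1" "csign (G2 G n) (Wr G 1) (Wr G i) = sg G 1 i"
    "csign (G2 G n) (Wr G i) (Wr G 2) = sg G i 2" "csign (G2 G n) (Wr G 2) (Wr G i) = sg G 2 i"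
  using big_facts[OF i] sgG2_all[OF i] sgG2_12 sgG_facts[OF e, of i]
  by (cases "al G i"; cases "be G i"; simp add: Wr_def sgn_def)+

lemma rho_pair_12:
  assumes e: "{1,2} \<in> G"
  shows "csign (G2 G n) (Wr G 1) (Wr G 2) = sg G 1 2" "csign (G2 G n) (Wr G 2) (Wr G 1) = sg G 2 1"
  using sgG2_12 sgG_12[OF e] by (simp_all add: Wr_def sgn_def)

lemma rho_pair:
  assumes e: "{1,2} \<in> G" and i: "i \<in> {1..n}" and j: "j \<in> {1..n}" and ij: "i \<noteq> j"
  shows "csign (G2 G n) (Wr G i) (Wr G j) = sg G i j"
  using i
proof (cases rule: three_cases)
  case 1
  from j show ?thesis
    by (cases rule: three_cases) (use 1 ij rho_pair_12[OF e] rho_pair_k1[OF e] in auto)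
next
  case 2
  from j show ?thesis
    by (cases rule: three_cases) (use 2 ij rho_pair_12[OF e] rho_pair_k1[OF e] in auto)
next
  case 3
  from j show ?thesis
    by (cases rule: three_cases) (use 3 ij rho_pair_kl rho_pair_k1[OF e] in auto)
qed

lemma rho_sq_k:
  assumes i: "2 < i"
  shows "snd (nf (G2 G n) (Wr G i @ Wr G i)) = [] \<and> Cr G i * Cr G i * fst (nf (G2 G n) (Wr G i @ Wr G i)) = -1"
  using big_facts[OF i] sgG2_all[OF i] sgG2_12
  by (cases "al G i"; cases "be G i"; simp add: Wr_def Cr_def)

lemma rho_sq:
  assumes i: "i \<in> {1..n}" and n: "2 \<le> n"
  shows "mon (Cr G i * Cr G i) (Wr G i @ Wr G i) + mon 1 [] \<in> II n (G2 G n)"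
proof (rule sq_from_nf)
  show "set (Wr G i) \<subseteq> {1..n}" using Wr_range[OF n i] .
  from i have "snd (nf (G2 G n) (Wr G i @ Wr G i)) = [] \<and> Cr G i * Cr G i * fst (nf (G2 G n) (Wr G i @ Wr G i)) = -1"
  proof (cases rule: three_cases)
    case 3 then show ?thesis using rho_sq_k by blast
  qed (auto simp: Wr_def Cr_def)
  thus "snd (nf (G2 G n) (Wr G i @ Wr G i)) = []" "Cr G i * Cr G i * fst (nf (G2 G n) (Wr G i @ Wr G i)) = -1"
    by auto
qed

lemma kappa_pair_kl:
  assumes e: "{1,2} \<in> G" and i: "2 < i" "i \<le> n" and j: "2 < j" "j \<le> n" and ij: "i \<noteq> j"
  shows "csign G (Wk G i) (Wk G j) = sg (G2 G n) i j"
proof -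
  have s: "sg (G2 G n) i j = (if par G i j then -1 else 1)"
    using sg_G2_ij[of i j n G] i j ij by auto
  have p: "par G i j \<longleftrightarrow> (({i, j} \<in> G) \<noteq> ((be G i \<and> al G j) \<noteq> (al G i \<and> be G j)))" by (simp add: par_def)
  have g: "sg G i j = (if {i, j} \<in> G then -1 else 1)" "sg G j i = (if {i, j} \<in> G then -1 else 1)"
    by (simp_all add: sg_def insert_commute)
  show ?thesis
    using big_facts[OF i(1)] big_facts[OF j(1)] ij sgG_facts[OF e, of i] sgG_facts[OF e, of j] sgG_12[OF e] s p g
    by (cases "al G i"; cases "be G i"; cases "al G j"; cases "be G j"; simp add: Wk_def sgn_def)
qed

lemma kappa_pair_k1:
  assumes e: "{1,2} \<in> G" and i: "2 < i"
  shows "csign G (Wk G i) (Wk G 1) = sg (G2 G n) i 1" "csign G (Wk G 1) (Wk G i) = sg (G2 G n) 1 i"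
    "csign G (Wk G i) (Wk G 2) = sg (G2 G n) i 2" "csign G (Wk G 2) (Wk G i) = sg (G2 G n) 2 i"
  using big_facts[OF i] sgG2_all[OF i] sgG_12[OF e] sgG_facts[OF e, of i]
  by (cases "al G i"; cases "be G i"; simp add: Wk_def sgn_def)+

lemma kappa_pair_12:
  assumes e: "{1,2} \<in> G"
  shows "csign G (Wk G 1) (Wk G 2) = sg (G2 G n) 1 2" "csign G (Wk G 2) (Wk G 1) = sg (G2 G n) 2 1"
  using sgG2_12 sgG_12[OF e] by (simp_all add: Wk_def sgn_def)

lemma kappa_pair:
  assumes e: "{1,2} \<in> G" and i: "i \<in> {1..n}" and j: "j \<in> {1..n}" and ij: "i \<noteq> j"
  shows "csign G (Wk G i) (Wk G j) = sg (G2 G n) i j"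
  using i
proof (cases rule: three_cases)
  case 1
  from j show ?thesis
    by (cases rule: three_cases) (use 1 ij kappa_pair_12[OF e] kappa_pair_k1[OF e] in auto)
next
  case 2
  from j show ?thesis
    by (cases rule: three_cases) (use 2 ij kappa_pair_12[OF e] kappa_pair_k1[OF e] in auto)
next
  case 3
  from j show ?thesis
    by (cases rule: three_cases) (use 3 ij kappa_pair_kl[OF e] kappa_pair_k1[OF e] in auto)
qed

lemma kappa_sq_k:
  assumes e: "{1,2} \<in> G" and i: "2 < i"
  shows "snd (nf G (Wk G i @ Wk G i)) = [] \<and> Ck G i * Ck G i * fst (nf G (Wk G i @ Wk G i)) = -1"
  using big_facts[OF i] sgG_facts[OF e, of i] sgG_12[OF e]
  by (cases "al G i"; cases "be G i"; simp add: Wk_def Ck_def)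

lemma kappa_sq:
  assumes e: "{1,2} \<in> G" and i: "i \<in> {1..n}" and n: "2 \<le> n"
  shows "mon (Ck G i * Ck G i) (Wk G i @ Wk G i) + mon 1 [] \<in> II n G"
proof (rule sq_from_nf)
  show "set (Wk G i) \<subseteq> {1..n}" using Wk_range[OF n i] .
  from i have "snd (nf G (Wk G i @ Wk G i)) = [] \<and> Ck G i * Ck G i * fst (nf G (Wk G i @ Wk G i)) = -1"
  proof (cases rule: three_cases)
    case 3 then show ?thesis using kappa_sq_k[OF e] by blast
  qed (auto simp: Wk_def Ck_def)
  thus "snd (nf G (Wk G i @ Wk G i)) = []" "Ck G i * Ck G i * fst (nf G (Wk G i @ Wk G i)) = -1"
    by auto
qed

lemma rt1_k:
  assumes e: "{1,2} \<in> G" and i: "2 < i"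
  shows "snd (nf G (Ww (Wk G) (Wr G i))) = [i] \<and> Cr G i * Cw (Ck G) (Wr G i) * fst (nf G (Ww (Wk G) (Wr G i))) = 1"
  using big_facts[OF i] sgG_facts[OF e, of i] sgG_12[OF e]
  by (cases "al G i"; cases "be G i"; simp add: Wk_def Ck_def Wr_def Cr_def)

lemma rt2_k:
  assumes i: "2 < i"
  shows "snd (nf (G2 G n) (Ww (Wr G) (Wk G i))) = [i] \<and> Ck G i * Cw (Cr G) (Wk G i) * fst (nf (G2 G n) (Ww (Wr G) (Wk G i))) = 1"
  using big_facts[OF i] sgG2_all[OF i] sgG2_12
  by (cases "al G i"; cases "be G i"; simp add: Wk_def Ck_def Wr_def Cr_def)


lemma Ww_range: "(\<And>a. a \<in> set w \<Longrightarrow> set (W a) \<subseteq> S) \<Longrightarrow> set (Ww W w) \<subseteq> S"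
  by (induction w) auto

lemma step2_good:
  assumes e: "{1,2} \<in> G" and n: "2 \<le> n"
  shows "good n G (G2 G n) (subst (Cr G) (Wr G)) (subst (Ck G) (Wk G))"
proof (rule good_subst)
  show "set (Wr G i) \<subseteq> {1..n}" if "i \<in> {1..n}" for i using Wr_range[OF n that] .
  show "set (Wk G i) \<subseteq> {1..n}" if "i \<in> {1..n}" for i using Wk_range[OF n that] .
  show "subst (Cr G) (Wr G) r \<in> II n (G2 G n)" if "r \<in> relators n G" for r
  proof (rule rel_ok[OF _ _ _ that])
    show "set (Wr G i) \<subseteq> {1..n}" if "i \<in> {1..n}" for i using Wr_range[OF n that] .
    show "mon (Cr G i * Cr G i) (Wr G i @ Wr G i) + mon 1 [] \<in> II n (G2 G n)" if "i \<in> {1..n}" for i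
      using rho_sq[OF that n] .
    show "mon (Cr G i * Cr G j) (Wr G i @ Wr G j) + mon (- sg G i j * (Cr G j * Cr G i)) (Wr G j @ Wr G i) \<in> II n (G2 G n)"
      if "i \<in> {1..n}" "j \<in> {1..n}" "i \<noteq> j" for i j
      by (rule pair_from_csign) (use Wr_range[OF n] rho_pair[OF e] that in auto)
  qed
  show "subst (Ck G) (Wk G) r \<in> II n G" if "r \<in> relators n (G2 G n)" for r
  proof (rule rel_ok[OF _ _ _ that])
    show "set (Wk G i) \<subseteq> {1..n}" if "i \<in> {1..n}" for i using Wk_range[OF n that] .
    show "mon (Ck G i * Ck G i) (Wk G i @ Wk G i) + mon 1 [] \<in> II n G" if "i \<in> {1..n}" for i
      using kappa_sq[OF e that n] .
    show "mon (Ck G i * Ck G j) (Wk G i @ Wk G j) + mon (- sg (G2 G n) i j * (Ck G j * Ck G i)) (Wk G j @ Wk G i) \<in> II n G"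
      if "i \<in> {1..n}" "j \<in> {1..n}" "i \<noteq> j" for i j
      by (rule pair_from_csign) (use Wk_range[OF n] kappa_pair[OF e] that in auto)
  qed
  show "ceq n G (mon (Cr G i * Cw (Ck G) (Wr G i)) (Ww (Wk G) (Wr G i))) (mon 1 [i])" if i: "i \<in> {1..n}" for i
  proof (rule rt_from_nf[OF _ i])
    show "set (Ww (Wk G) (Wr G i)) \<subseteq> {1..n}"
    proof (rule Ww_range)
      fix a assume "a \<in> set (Wr G i)"
      hence "a \<in> {1..n}" using Wr_range[OF n i] by blast
      thus "set (Wk G a) \<subseteq> {1..n}" by (rule Wk_range[OF n])
    qed
    from i have "snd (nf G (Ww (Wk G) (Wr G i))) = [i] \<and> Cr G i * Cw (Ck G) (Wr G i) * fst (nf G (Ww (Wk G) (Wr G i))) = 1"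
    proof (cases rule: three_cases)
      case 3 then show ?thesis using rt1_k[OF e] by blast
    qed (auto simp: Wk_def Ck_def Wr_def Cr_def)
    thus "snd (nf G (Ww (Wk G) (Wr G i))) = [i]" "Cr G i * Cw (Ck G) (Wr G i) * fst (nf G (Ww (Wk G) (Wr G i))) = 1"
      by auto
  qed
  show "ceq n (G2 G n) (mon (Ck G i * Cw (Cr G) (Wk G i)) (Ww (Wr G) (Wk G i))) (mon 1 [i])" if i: "i \<in> {1..n}" for i
  proof (rule rt_from_nf[OF _ i])
    show "set (Ww (Wr G) (Wk G i)) \<subseteq> {1..n}"
    proof (rule Ww_range)
      fix a assume "a \<in> set (Wk G i)"
      hence "a \<in> {1..n}" using Wk_range[OF n i] by blast
      thus "set (Wr G a) \<subseteq> {1..n}" by (rule Wr_range[OF n])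
    qed
    from i have "snd (nf (G2 G n) (Ww (Wr G) (Wk G i))) = [i] \<and> Ck G i * Cw (Cr G) (Wk G i) * fst (nf (G2 G n) (Ww (Wr G) (Wk G i))) = 1"
    proof (cases rule: three_cases)
      case 3 then show ?thesis using rt2_k by blast
    qed (auto simp: Wk_def Ck_def Wr_def Cr_def)
    thus "snd (nf (G2 G n) (Ww (Wr G) (Wk G i))) = [i]" "Ck G i * Cw (Cr G) (Wk G i) * fst (nf (G2 G n) (Ww (Wr G) (Wk G i))) = 1"
      by auto
  qed
qed

definition tr :: "nat \<Rightarrow> nat \<Rightarrow> nat \<Rightarrow> nat" where
  "tr x y z = (if z = x then y else if z = y then x else z)"

lemma tr_tr[simp]: "tr x y (tr x y z) = z" by (simp add: tr_def)
lemma tr_range: "x \<in> S \<Longrightarrow> y \<in> S \<Longrightarrow> z \<in> S \<Longrightarrow> tr x y z \<in> S" by (simp add: tr_def)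

theorem mainTheorem2:
  fixes n :: nat and E :: "nat set set"
  assumes "simple_graph n E" and "E \<noteq> {}"
  shows "\<exists>E'. simple_graph n E'
              \<and> {1, 2} \<in> E'
              \<and> (\<forall>e\<in>E'. e = {1, 2} \<or> e \<subseteq> {3..n})
              \<and> cga_isomorphic n E E'"
proof -
  obtain e where eE: "e \<in> E" using assms(2) by blast
  have "\<exists>i j. e = {i, j} \<and> i \<noteq> j \<and> i \<in> {1..n} \<and> j \<in> {1..n}"
    using assms(1) eE unfolding simple_graph_def by (rule bspec)
  then obtain a b where ab0: "e = {a, b}" "a \<noteq> b" "a \<in> {1..n}" "b \<in> {1..n}" by blast
  have ab: "{a, b} \<in> E" "a \<noteq> b" "a \<in> {1..n}" "b \<in> {1..n}" using ab0 eE by auto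
  have n: "2 \<le> n" using ab by auto
  have r12: "1 \<in> {1..n}" "2 \<in> {1..n}" using n by auto
  define c where "c = tr 1 a b"
  define \<pi> where "\<pi> z = tr 1 a (tr 2 c z)" for z
  define \<pi>' where "\<pi>' z = tr 2 c (tr 1 a z)" for z
  have c: "c \<in> {1..n}" "c \<noteq> 1" using ab r12 unfolding c_def tr_def by auto
  have P: "\<pi> i \<in> {1..n} \<and> \<pi>' i \<in> {1..n} \<and> \<pi>' (\<pi> i) = i \<and> \<pi> (\<pi>' i) = i" if "i \<in> {1..n}" for i
  proof -
    have "\<pi> i \<in> {1..n}" unfolding \<pi>_def
      by (rule tr_range[OF r12(1) ab(3) tr_range[OF r12(2) c(1) that]])
    moreover have "\<pi>' i \<in> {1..n}" unfolding \<pi>'_def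
      by (rule tr_range[OF r12(2) c(1) tr_range[OF r12(1) ab(3) that]])
    ultimately show ?thesis unfolding \<pi>_def \<pi>'_def by simp
  qed
  have p1: "\<pi> 1 = a" unfolding \<pi>_def using c by (simp add: tr_def)
  have "tr 2 c 2 = c" by (simp add: tr_def)
  hence p2: "\<pi> 2 = b" unfolding \<pi>_def c_def by simp
  define E1 where "E1 = {{i, j} | i j. i \<in> {1..n} \<and> j \<in> {1..n} \<and> i \<noteq> j \<and> {\<pi> i, \<pi> j} \<in> E}"
  have Ed: "{\<pi> i, \<pi> j} \<in> E \<longleftrightarrow> {i, j} \<in> E1" if "i \<in> {1..n}" "j \<in> {1..n}" "i \<noteq> j" for i j
  proof
    assume "{\<pi> i, \<pi> j} \<in> E" thus "{i, j} \<in> E1" unfolding E1_def using that by blast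
  next
    assume "{i, j} \<in> E1"
    then obtain i' j' where "{i, j} = {i', j'}" "{\<pi> i', \<pi> j'} \<in> E" unfolding E1_def by blast
    thus "{\<pi> i, \<pi> j} \<in> E" by (auto simp: doubleton_eq_iff insert_commute)
  qed
  have g1: "good n E1 E (subst (\<lambda>_. 1) (\<lambda>i. [\<pi> i])) (subst (\<lambda>_. 1) (\<lambda>i. [\<pi>' i]))"
    by (rule perm_good[OF P Ed])
  have e12: "{1, 2} \<in> E1" using Ed[of 1 2] r12 p1 p2 ab by auto
  have g2: "good n E1 (G2 E1 n) (subst (Cr E1) (Wr E1)) (subst (Ck E1) (Wk E1))"
    by (rule step2_good[OF e12 n])
  note good_trans[OF good_sym[OF g1] g2]
  hence iso: "cga_isomorphic n E (G2 E1 n)" by (rule good_iso)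
  have sg: "simple_graph n (G2 E1 n)"
    unfolding simple_graph_def G2_def using n by force
  have e12': "{1, 2} \<in> G2 E1 n" by (simp add: G2_def)
  have ed: "\<forall>e\<in>G2 E1 n. e = {1, 2} \<or> e \<subseteq> {3..n}" by (auto simp: G2_def)
  show ?thesis using iso sg e12' ed by blast
qed


end
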